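(* Let $A,B\subseteq\mathcal{R}$ be outer measurable with $M_u(B)=0$. Then every subset $C\subseteq B$ is outer measurable with $M_u(C)=0$, and $A\setminus C$ is outer measurable with $M_u(A\setminus C)=M_u(A)$.
   Context: $\mathcal{R}$ denotes the Levi-Civita field: functions $x:\mathbb{Q}\to\mathbb{R}$ with left-finite support, with componentwise addition and formal power series multiplication, ordered by $x>0$ iff $x\ne0$ and $x[\min\operatorname{supp}x]>0$; it is a non-Archimedean ordered field extension of $\mathbb{R}$, Cauchy complete in the order topology, in which all limits and series are taken (a series $\sum a_n$ converges iff $a_n\to0$). An interval is a set $[a,b],[a,b),(a,b]$ or $(a,b)$ with $a<b$ in $\mathcal{R}$, of length $l=b-a$. A cover of $A\subseteq\mathcal{R}$ is a sequence of intervals $(S_n)_{n\ge1}$ with $A\subseteq\bigcup_n S_n$ and $\sum_n l(S_n)$ convergent in $\mathcal{R}$. $A$ is called outer measurable if the infimum $\inf\{\sum_n l(S_n): (S_n)\text{ a cover of }A\}$ exists in $\mathcal{R}$; this infimum is then called the outer measure $M_u(A)$. *)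

theory Defs
  imports Complex_Main
begin

section \<open>The Levi-Civita field\<close>

typedef lc = "{x :: rat \<Rightarrow> real. \<forall>r. finite {q. x q \<noteq> 0 \<and> q < r}}"
  by (rule exI[of _ "\<lambda>_. 0"]) auto

instantiation lc :: "{zero, one, plus, minus, uminus, times, ord, abs}"
begin

definition zero_lc :: lc where
  "zero_lc = Abs_lc (\<lambda>_. 0)"

definition one_lc :: lc where
  "one_lc = Abs_lc (\<lambda>q. if q = 0 then 1 else 0)"

definition plus_lc :: "lc \<Rightarrow> lc \<Rightarrow> lc" where
  "plus_lc x y = Abs_lc (\<lambda>q. Rep_lc x q + Rep_lc y q)"

definition uminus_lc :: "lc \<Rightarrow> lc" where
  "uminus_lc x = Abs_lc (\<lambda>q. - Rep_lc x q)"

definition minus_lc :: "lc \<Rightarrow> lc \<Rightarrow> lc" where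
  "minus_lc x y = Abs_lc (\<lambda>q. Rep_lc x q - Rep_lc y q)"

text \<open>Formal power series (Cauchy) product; the sum is finite by left-finiteness.\<close>
definition times_lc :: "lc \<Rightarrow> lc \<Rightarrow> lc" where
  "times_lc x y = Abs_lc (\<lambda>q. \<Sum>p\<in>{p. Rep_lc x p \<noteq> 0 \<and> Rep_lc y (q - p) \<noteq> 0}.
                                  Rep_lc x p * Rep_lc y (q - p))"

definition lc_pos :: "lc \<Rightarrow> bool" where
  "lc_pos x \<longleftrightarrow> (\<exists>q. Rep_lc x q > 0 \<and> (\<forall>p<q. Rep_lc x p = 0))"

definition less_lc :: "lc \<Rightarrow> lc \<Rightarrow> bool" where
  "less_lc x y \<longleftrightarrow> lc_pos (y - x)"

definition less_eq_lc :: "lc \<Rightarrow> lc \<Rightarrow> bool" where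
  "less_eq_lc x y \<longleftrightarrow> x < y \<or> x = y"

definition abs_lc :: "lc \<Rightarrow> lc" where
  "abs_lc x = (if x < 0 then - x else x)"

instance ..
end

definition lc_tendsto :: "(nat \<Rightarrow> lc) \<Rightarrow> lc \<Rightarrow> bool" where
  "lc_tendsto s L \<longleftrightarrow> (\<forall>e>0. \<exists>N. \<forall>n\<ge>N. \<bar>s n - L\<bar> < e)"

primrec lc_psum :: "(nat \<Rightarrow> lc) \<Rightarrow> nat \<Rightarrow> lc" where
  "lc_psum f 0 = 0"
| "lc_psum f (Suc n) = lc_psum f n + f n"

definition lc_summable :: "(nat \<Rightarrow> lc) \<Rightarrow> bool" where
  "lc_summable f \<longleftrightarrow> (\<exists>L. lc_tendsto (lc_psum f) L)"

definition lc_suminf :: "(nat \<Rightarrow> lc) \<Rightarrow> lc" where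
  "lc_suminf f = (THE L. lc_tendsto (lc_psum f) L)"

datatype ikind = IClosed | IClosedOpen | IOpenClosed | IOpen

fun iset :: "lc \<times> lc \<times> ikind \<Rightarrow> lc set" where
  "iset (a, b, IClosed) = {x. a \<le> x \<and> x \<le> b}"
| "iset (a, b, IClosedOpen) = {x. a \<le> x \<and> x < b}"
| "iset (a, b, IOpenClosed) = {x. a < x \<and> x \<le> b}"
| "iset (a, b, IOpen) = {x. a < x \<and> x < b}"

fun ilen :: "lc \<times> lc \<times> ikind \<Rightarrow> lc" where
  "ilen (a, b, k) = b - a"

fun is_interval :: "lc \<times> lc \<times> ikind \<Rightarrow> bool" where
  "is_interval (a, b, k) \<longleftrightarrow> a < b"

definition is_cover :: "(nat \<Rightarrow> lc \<times> lc \<times> ikind) \<Rightarrow> lc set \<Rightarrow> bool" where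
  "is_cover S A \<longleftrightarrow> (\<forall>n. is_interval (S n)) \<and> A \<subseteq> (\<Union>n. iset (S n))
                     \<and> lc_summable (\<lambda>n. ilen (S n))"

definition cover_sums :: "lc set \<Rightarrow> lc set" where
  "cover_sums A = {lc_suminf (\<lambda>n. ilen (S n)) | S. is_cover S A}"

definition lc_is_inf :: "lc set \<Rightarrow> lc \<Rightarrow> bool" where
  "lc_is_inf V m \<longleftrightarrow> (\<forall>v\<in>V. m \<le> v) \<and> (\<forall>m'. (\<forall>v\<in>V. m' \<le> v) \<longrightarrow> m' \<le> m)"

definition outer_measurable :: "lc set \<Rightarrow> bool" where
  "outer_measurable A \<longleftrightarrow> (\<exists>m. lc_is_inf (cover_sums A) m)"

definition Mu :: "lc set \<Rightarrow> lc" where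
  "Mu A = (THE m. lc_is_inf (cover_sums A) m)"

end

theory Submission
  imports Defs
begin

definition LF :: "(rat \<Rightarrow> real) set" where
  "LF = {x. \<forall>r. finite {q. x q \<noteq> 0 \<and> q < r}}"

lemma Rep_LF: "Rep_lc x \<in> LF"
  using Rep_lc[of x] unfolding LF_def by simp

lemma LF_add: "f \<in> LF \<Longrightarrow> g \<in> LF \<Longrightarrow> (\<lambda>q. f q + g q) \<in> LF"
  unfolding LF_def
proof (safe)
  fix r assume a: "\<forall>r. finite {q. f q \<noteq> 0 \<and> q < r}" "\<forall>r. finite {q. g q \<noteq> 0 \<and> q < r}"
  have "{q. f q + g q \<noteq> 0 \<and> q < r} \<subseteq> {q. f q \<noteq> 0 \<and> q < r} \<union> {q. g q \<noteq> 0 \<and> q < r}" by auto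
  then show "finite {q. f q + g q \<noteq> 0 \<and> q < r}" using a finite_subset by blast
qed

lemma LF_neg: "f \<in> LF \<Longrightarrow> (\<lambda>q. - f q) \<in> LF"
  unfolding LF_def by simp

lemma LF_scale: "f \<in> LF \<Longrightarrow> (\<lambda>q. f q / 2) \<in> LF"
  unfolding LF_def by simp

lemma LF_diff: "f \<in> LF \<Longrightarrow> g \<in> LF \<Longrightarrow> (\<lambda>q. f q - g q) \<in> LF"
  using LF_add[of f "\<lambda>q. - g q"] LF_neg[of g] by simp

lemma LF_zero: "(\<lambda>_. 0) \<in> LF" unfolding LF_def by simp

lemma Abs_inv: "f \<in> LF \<Longrightarrow> Rep_lc (Abs_lc f) = f"
  by (rule Abs_lc_inverse) (simp add: LF_def)

lemma Rep_plus: "Rep_lc (x + y) = (\<lambda>q. Rep_lc x q + Rep_lc y q)"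
  unfolding plus_lc_def by (rule Abs_inv[OF LF_add[OF Rep_LF Rep_LF]])
lemma Rep_minus: "Rep_lc (x - y) = (\<lambda>q. Rep_lc x q - Rep_lc y q)"
  unfolding minus_lc_def by (rule Abs_inv[OF LF_diff[OF Rep_LF Rep_LF]])
lemma Rep_uminus: "Rep_lc (- x) = (\<lambda>q. - Rep_lc x q)"
  unfolding uminus_lc_def by (rule Abs_inv[OF LF_neg[OF Rep_LF]])
lemma Rep_zero: "Rep_lc 0 = (\<lambda>_. 0)"
  unfolding zero_lc_def by (rule Abs_inv[OF LF_zero])

lemma lc_eqI: "(\<And>q. Rep_lc x q = Rep_lc y q) \<Longrightarrow> x = y"
  using Rep_lc_inject by (metis ext)

instance lc :: ab_group_add
  by standard (auto intro!: lc_eqI simp: Rep_plus Rep_minus Rep_uminus Rep_zero)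

lemma pos_zero: "\<not> lc_pos 0"
  unfolding lc_pos_def Rep_zero by simp

lemma pos_asym: "lc_pos x \<Longrightarrow> \<not> lc_pos (- x)"
proof
  assume a: "lc_pos x" and b: "lc_pos (- x)"
  obtain a where a: "Rep_lc x a > 0" "\<forall>p<a. Rep_lc x p = 0" using a lc_pos_def by blast
  obtain b where b: "- Rep_lc x b > 0" "\<forall>p<b. - Rep_lc x p = 0"
    using b unfolding lc_pos_def Rep_uminus by blast
  show False
  proof (cases a b rule: linorder_cases)
    case less then show False using a b by force
  next
    case equal then show False using a b by force
  next
    case greater then show False using a b by force
  qed
qed

lemma pos_add: assumes "lc_pos x" "lc_pos y" shows "lc_pos (x + y)"
proof -
  obtain a where a: "Rep_lc x a > 0" "\<forall>p<a. Rep_lc x p = 0" using assms(1) lc_pos_def by blast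
  obtain b where b: "Rep_lc y b > 0" "\<forall>p<b. Rep_lc y p = 0" using assms(2) lc_pos_def by blast
  show ?thesis unfolding lc_pos_def Rep_plus
  proof (cases a b rule: linorder_cases)
    case less
    then show "\<exists>q. 0 < Rep_lc x q + Rep_lc y q \<and> (\<forall>p<q. Rep_lc x p + Rep_lc y p = 0)"
      using a b by (intro exI[of _ a]) auto
  next
    case equal
    then show "\<exists>q. 0 < Rep_lc x q + Rep_lc y q \<and> (\<forall>p<q. Rep_lc x p + Rep_lc y p = 0)"
      using a b by (intro exI[of _ a]) auto
  next
    case greater
    then show "\<exists>q. 0 < Rep_lc x q + Rep_lc y q \<and> (\<forall>p<q. Rep_lc x p + Rep_lc y p = 0)"
      using a b by (intro exI[of _ b]) auto
  qed
qed

lemma pos_total: assumes "x \<noteq> 0" shows "lc_pos x \<or> lc_pos (- x)"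
proof -
  obtain s where s: "Rep_lc x s \<noteq> 0"
    using assms Rep_zero lc_eqI by (metis)
  define F where "F = {q. Rep_lc x q \<noteq> 0 \<and> q < s + 1}"
  have fin: "finite F" using Rep_LF[of x] unfolding LF_def F_def by simp
  have ne: "s \<in> F" using s unfolding F_def by simp
  define m where "m = Min F"
  have mF: "m \<in> F" using fin ne m_def Min_in by blast
  have mle: "m \<le> s" using fin ne m_def Min_le by blast
  have below: "\<forall>p<m. Rep_lc x p = 0"
  proof (intro allI impI)
    fix p assume "p < m"
    show "Rep_lc x p = 0"
    proof (rule ccontr)
      assume "Rep_lc x p \<noteq> 0"
      then have "p \<in> F" using \<open>p < m\<close> mle unfolding F_def by simp
      then have "m \<le> p" using fin m_def Min_le by blast
      then show False using \<open>p < m\<close> by simp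
    qed
  qed
  have "Rep_lc x m \<noteq> 0" using mF F_def by simp
  then have "Rep_lc x m > 0 \<or> - Rep_lc x m > 0" by linarith
  then show ?thesis unfolding lc_pos_def Rep_uminus using below by auto
qed

lemma lt_lc: "x < y \<longleftrightarrow> lc_pos (y - x)" for x y :: lc
  by (simp add: less_lc_def)

lemma le_lc: "x \<le> y \<longleftrightarrow> lc_pos (y - x) \<or> x = y" for x y :: lc
  by (simp add: less_lc_def less_eq_lc_def)

lemma negdiff: "- (y - x) = x - (y::lc)" by simp
lemma diffsplit: "z - x = (z - y) + (y - (x::lc))" by simp

instance lc :: linordered_ab_group_add
proof
  fix x y z :: lc
  show "x < y \<longleftrightarrow> x \<le> y \<and> \<not> y \<le> x"
  proof
    assume a: "x < y"
    then have p: "lc_pos (y - x)" by (simp add: lt_lc)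
    have "x \<noteq> y" using p pos_zero by auto
    moreover have "\<not> lc_pos (x - y)" using pos_asym[OF p] negdiff by metis
    ultimately show "x \<le> y \<and> \<not> y \<le> x" using p le_lc by auto
  next
    assume "x \<le> y \<and> \<not> y \<le> x"
    then show "x < y" using le_lc lt_lc by auto
  qed
  show "x \<le> x" by (simp add: le_lc)
  show "x \<le> y \<Longrightarrow> y \<le> z \<Longrightarrow> x \<le> z"
  proof -
    assume "x \<le> y" "y \<le> z"
    then consider "x = y" | "y = z" | "lc_pos (y - x) \<and> lc_pos (z - y)" using le_lc by auto
    then show "x \<le> z"
    proof cases
      case 3 then have "lc_pos ((z - y) + (y - x))" using pos_add by blast
      then show ?thesis using diffsplit le_lc by metis
    qed (use \<open>x \<le> y\<close> \<open>y \<le> z\<close> in auto)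
  qed
  show "x \<le> y \<Longrightarrow> y \<le> x \<Longrightarrow> x = y"
  proof -
    assume "x \<le> y" "y \<le> x"
    show "x = y"
    proof (rule ccontr)
      assume "x \<noteq> y"
      then have "lc_pos (y - x)" "lc_pos (x - y)" using \<open>x \<le> y\<close> \<open>y \<le> x\<close> le_lc by auto
      then show False using pos_asym negdiff by metis
    qed
  qed
  show "x \<le> y \<or> y \<le> x"
  proof (cases "y - x = 0")
    case True then show ?thesis by (simp add: le_lc)
  next
    case False
    then have "lc_pos (y - x) \<or> lc_pos (x - y)" using pos_total negdiff by metis
    then show ?thesis using le_lc by auto
  qed
  show "x \<le> y \<Longrightarrow> z + x \<le> z + y"
    by (simp add: le_lc)
qed


lemma abs_lt: "\<bar>x\<bar> < e \<longleftrightarrow> x < e \<and> - x < e" for x e :: lc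
proof (cases "x < 0")
  case True
  then have xx: "x < - x" by simp
  have "- x < e \<Longrightarrow> x < e" using xx by (rule order.strict_trans)
  then show ?thesis using True unfolding abs_lc_def by auto
next
  case False
  then have xx: "- x \<le> x" by simp
  have "x < e \<Longrightarrow> - x < e" using xx by (rule order.strict_trans1)
  then show ?thesis using False unfolding abs_lc_def by auto
qed

definition lc_half :: "lc \<Rightarrow> lc" where
  "lc_half e = Abs_lc (\<lambda>q. Rep_lc e q / 2)"

lemma Rep_half: "Rep_lc (lc_half e) = (\<lambda>q. Rep_lc e q / 2)"
  unfolding lc_half_def by (rule Abs_inv[OF LF_scale[OF Rep_LF]])

lemma half_half: "lc_half e + lc_half e = e"
  by (rule lc_eqI) (simp add: Rep_plus Rep_half)

lemma half_pos: assumes "0 < e" shows "0 < lc_half e"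
proof -
  have "lc_pos e" using assms by (simp add: lt_lc)
  then obtain q where "Rep_lc e q > 0" "\<forall>p<q. Rep_lc e p = 0" unfolding lc_pos_def by blast
  then have "lc_pos (lc_half e)" unfolding lc_pos_def Rep_half by (intro exI[of _ q]) auto
  then show ?thesis by (simp add: lt_lc)
qed

lemma add_close:
  fixes a b v w h :: lc
  assumes "\<bar>a - v\<bar> < h" "\<bar>b - w\<bar> < h"
  shows "\<bar>(a + b) - (v + w)\<bar> < h + h"
proof -
  have 1: "a - v < h" "- (a - v) < h" "b - w < h" "- (b - w) < h" using assms abs_lt by auto
  have "(a - v) + (b - w) < h + h" using add_strict_mono[OF 1(1) 1(3)] .
  moreover have "- (a - v) + - (b - w) < h + h" using add_strict_mono[OF 1(2) 1(4)] .
  ultimately show ?thesis unfolding abs_lt by (simp add: algebra_simps)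
qed

lemma tendsto_unique_aux:
  assumes "lc_tendsto s L" "lc_tendsto s L'" "L < L'" shows False
proof -
  define h where "h = lc_half (L' - L)"
  have hp: "0 < h" unfolding h_def using assms(3) half_pos by simp
  obtain N1 where N1: "\<forall>n\<ge>N1. \<bar>s n - L\<bar> < h" using assms(1) hp lc_tendsto_def by blast
  obtain N2 where N2: "\<forall>n\<ge>N2. \<bar>s n - L'\<bar> < h" using assms(2) hp lc_tendsto_def by blast
  define n where "n = max N1 N2"
  have "s n - L < h" "- (s n - L') < h" using N1 N2 abs_lt n_def by auto
  then have "(s n - L) + - (s n - L') < h + h" by (rule add_strict_mono)
  then have "L' - L < L' - L" using half_half h_def by (simp add: algebra_simps)
  then show False by simp
qed

lemma tendsto_unique: "lc_tendsto s L \<Longrightarrow> lc_tendsto s L' \<Longrightarrow> L = L'"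
  using tendsto_unique_aux[of s L L'] tendsto_unique_aux[of s L' L] by (meson linorder_neqE)

lemma suminf_eq: "lc_tendsto (lc_psum f) L \<Longrightarrow> lc_suminf f = L"
  unfolding lc_suminf_def using tendsto_unique by blast

lemma psum_nonneg: "(\<And>n. 0 \<le> f n) \<Longrightarrow> 0 \<le> lc_psum f n"
  by (induction n) (auto intro: add_nonneg_nonneg)

lemma tendsto_nonneg:
  assumes "\<And>n. 0 \<le> s n" "lc_tendsto s L" shows "0 \<le> L"
proof (rule ccontr)
  assume "\<not> 0 \<le> L"
  then have "0 < - L" by simp
  then obtain N where "\<forall>n\<ge>N. \<bar>s n - L\<bar> < - L" using assms(2) lc_tendsto_def by blast
  then have "s N - L < - L" using abs_lt by blast
  then have "s N < 0" by simp
  then show False using assms(1)[of N] by simp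
qed

lemma ilen_pos: "is_interval I \<Longrightarrow> 0 < ilen I"
  by (cases I) auto

lemma cover_nonneg: assumes "is_cover S A" shows "0 \<le> lc_suminf (\<lambda>n. ilen (S n))"
proof -
  obtain L where L: "lc_tendsto (lc_psum (\<lambda>n. ilen (S n))) L"
    using assms unfolding is_cover_def lc_summable_def by blast
  have "\<And>n. 0 \<le> ilen (S n)" using assms ilen_pos unfolding is_cover_def
    by (simp add: order_less_imp_le)
  then have "0 \<le> L" using tendsto_nonneg[OF psum_nonneg L] by blast
  then show ?thesis using suminf_eq[OF L] by simp
qed

lemma cover_nonneg': "v \<in> cover_sums A \<Longrightarrow> 0 \<le> v"
  unfolding cover_sums_def using cover_nonneg by blast

lemma is_cover_mono: "is_cover S X \<Longrightarrow> Y \<subseteq> X \<Longrightarrow> is_cover S Y"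
  unfolding is_cover_def by blast

lemma cover_sums_anti: "Y \<subseteq> X \<Longrightarrow> cover_sums X \<subseteq> cover_sums Y"
  unfolding cover_sums_def using is_cover_mono by blast

lemma inf_unique: "lc_is_inf V m \<Longrightarrow> lc_is_inf V m' \<Longrightarrow> m = m'"
  unfolding lc_is_inf_def by (meson order_antisym)

lemma Mu_inf: "outer_measurable A \<Longrightarrow> lc_is_inf (cover_sums A) (Mu A)"
  unfolding outer_measurable_def Mu_def using inf_unique theI by metis

lemma Mu_from_inf: "lc_is_inf (cover_sums A) m \<Longrightarrow> outer_measurable A \<and> Mu A = m"
  unfolding outer_measurable_def Mu_def using inf_unique by blast

lemma psum_interleave:
  "lc_psum (\<lambda>n. if even n then f (n div 2) else g (n div 2)) (2 * n) = lc_psum f n + lc_psum g n \<and>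
   lc_psum (\<lambda>n. if even n then f (n div 2) else g (n div 2)) (Suc (2 * n)) = lc_psum f (Suc n) + lc_psum g n"
proof (induction n)
  case 0 then show ?case by simp
next
  case (Suc n)
  have e: "2 * Suc n = Suc (Suc (2 * n))" by simp
  show ?case using Suc unfolding e by (simp add: algebra_simps)
qed

lemma tendsto_interleave:
  assumes "lc_tendsto (lc_psum f) v" "lc_tendsto (lc_psum g) w"
  shows "lc_tendsto (lc_psum (\<lambda>n. if even n then f (n div 2) else g (n div 2))) (v + w)"
  unfolding lc_tendsto_def
proof (intro allI impI)
  fix e :: lc assume e: "0 < e"
  define h where "h = lc_half e"
  have hp: "0 < h" unfolding h_def using e half_pos by simp
  obtain N1 where N1: "\<forall>n\<ge>N1. \<bar>lc_psum f n - v\<bar> < h" using assms(1) hp lc_tendsto_def by blast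
  obtain N2 where N2: "\<forall>n\<ge>N2. \<bar>lc_psum g n - w\<bar> < h" using assms(2) hp lc_tendsto_def by blast
  define N where "N = max N1 N2"
  show "\<exists>K. \<forall>k\<ge>K. \<bar>lc_psum (\<lambda>n. if even n then f (n div 2) else g (n div 2)) k - (v + w)\<bar> < e"
  proof (intro exI[of _ "2 * N"] allI impI)
    fix k assume k: "2 * N \<le> k"
    define n where "n = k div 2"
    have nN: "N \<le> n" using k n_def by simp
    have "\<bar>lc_psum f n - v\<bar> < h" "\<bar>lc_psum g n - w\<bar> < h" "\<bar>lc_psum f (Suc n) - v\<bar> < h"
      using N1 N2 nN N_def by (simp_all del: lc_psum.simps)
    note c1 = add_close[OF this(1) this(2)] and c2 = add_close[OF this(3) this(2)]
    show "\<bar>lc_psum (\<lambda>n. if even n then f (n div 2) else g (n div 2)) k - (v + w)\<bar> < e"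
    proof (cases "even k")
      case True
      then have "k = 2 * n" using n_def by simp
      then show ?thesis using c1 psum_interleave[of f g n] half_half h_def by simp
    next
      case False
      then have "k = Suc (2 * n)" using n_def by presburger
      then have "lc_psum (\<lambda>n. if even n then f (n div 2) else g (n div 2)) k = lc_psum f (Suc n) + lc_psum g n"
        using psum_interleave[of f g n] by (simp del: lc_psum.simps)
      then show ?thesis using c2 half_half h_def by (simp del: lc_psum.simps)
    qed
  qed
qed

theorem proposition3p2:
  fixes A B C :: "lc set"
  assumes "outer_measurable A" and "outer_measurable B" and "Mu B = 0" and "C \<subseteq> B"
  shows "outer_measurable C \<and> Mu C = 0 \<and> outer_measurable (A - C) \<and> Mu (A - C) = Mu A"
proof -
  have infB: "lc_is_inf (cover_sums B) 0" using Mu_inf[OF assms(2)] assms(3) by simp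
  have infA: "lc_is_inf (cover_sums A) (Mu A)" using Mu_inf[OF assms(1)] .
  have "lc_is_inf (cover_sums C) 0"
    unfolding lc_is_inf_def
  proof (intro conjI allI impI ballI)
    fix v assume "v \<in> cover_sums C" then show "0 \<le> v" by (rule cover_nonneg')
  next
    fix m' assume "\<forall>v\<in>cover_sums C. m' \<le> v"
    then have "\<forall>v\<in>cover_sums B. m' \<le> v" using cover_sums_anti[OF assms(4)] by blast
    then show "m' \<le> 0" using infB unfolding lc_is_inf_def by blast
  qed
  then have P1: "outer_measurable C \<and> Mu C = 0" by (rule Mu_from_inf)
  have "lc_is_inf (cover_sums (A - C)) (Mu A)"
    unfolding lc_is_inf_def
  proof (intro conjI allI impI ballI)
    fix m' assume "\<forall>v\<in>cover_sums (A - C). m' \<le> v"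
    then have "\<forall>v\<in>cover_sums A. m' \<le> v" using cover_sums_anti[of "A - C" A] by blast
    then show "m' \<le> Mu A" using infA unfolding lc_is_inf_def by blast
  next
    fix v assume "v \<in> cover_sums (A - C)"
    then obtain S where S: "is_cover S (A - C)" "v = lc_suminf (\<lambda>n. ilen (S n))"
      unfolding cover_sums_def by blast
    show "Mu A \<le> v"
    proof (rule ccontr)
      assume "\<not> Mu A \<le> v"
      then have ep: "0 < Mu A - v" by simp
      have "\<not> (\<forall>u\<in>cover_sums B. Mu A - v \<le> u)"
        using infB ep unfolding lc_is_inf_def by (meson not_le)
      then obtain u where u: "u \<in> cover_sums B" "u < Mu A - v" by (meson not_le)
      then obtain T where T: "is_cover T B" "u = lc_suminf (\<lambda>n. ilen (T n))"
        unfolding cover_sums_def by blast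
      define U where "U = (\<lambda>n. if even n then S (n div 2) else T (n div 2))"
      obtain v' where v': "lc_tendsto (lc_psum (\<lambda>n. ilen (S n))) v'"
        using S(1) unfolding is_cover_def lc_summable_def by blast
      obtain u' where u': "lc_tendsto (lc_psum (\<lambda>n. ilen (T n))) u'"
        using T(1) unfolding is_cover_def lc_summable_def by blast
      have vv: "v = v'" using S(2) suminf_eq[OF v'] by simp
      have uu: "u = u'" using T(2) suminf_eq[OF u'] by simp
      have hU: "(\<lambda>n. ilen (U n)) = (\<lambda>n. if even n then ilen (S (n div 2)) else ilen (T (n div 2)))"
        unfolding U_def by auto
      have lim: "lc_tendsto (lc_psum (\<lambda>n. ilen (U n))) (v + u)"
        unfolding hU vv uu by (rule tendsto_interleave[OF v' u'])
      have cov: "is_cover U A"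
        unfolding is_cover_def
      proof (intro conjI allI)
        fix n show "is_interval (U n)" using S(1) T(1) unfolding U_def is_cover_def by auto
      next
        show "lc_summable (\<lambda>n. ilen (U n))" using lim lc_summable_def by blast
      next
        show "A \<subseteq> (\<Union>n. iset (U n))"
        proof
          fix x assume x: "x \<in> A"
          show "x \<in> (\<Union>n. iset (U n))"
          proof (cases "x \<in> C")
            case True
            then have "x \<in> B" using assms(4) by blast
            then obtain n where "x \<in> iset (T n)" using T(1) unfolding is_cover_def by blast
            moreover have "U (Suc (2 * n)) = T n" unfolding U_def by simp
            ultimately show ?thesis by (metis UN_I UNIV_I)
          next
            case False
            then have "x \<in> A - C" using x by blast
            then obtain n where "x \<in> iset (S n)" using S(1) unfolding is_cover_def by blast
            moreover have "U (2 * n) = S n" unfolding U_def by simp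
            ultimately show ?thesis by (metis UN_I UNIV_I)
          qed
        qed
      qed
      have "v + u \<in> cover_sums A"
        unfolding cover_sums_def using cov suminf_eq[OF lim] by force
      then have "Mu A \<le> v + u" using infA unfolding lc_is_inf_def by blast
      moreover have "v + u < Mu A" using u(2) by (simp add: algebra_simps)
      ultimately show False by simp
    qed
  qed
  then have P2: "outer_measurable (A - C) \<and> Mu (A - C) = Mu A" by (rule Mu_from_inf)
  show ?thesis using P1 P2 by blast
qed

end
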